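(* Let $\Omega$ be the Koenigs domain of a non-elliptic semigroup in $\mathbb D$. Then: (1) $\Lambda_p(\Omega)$ is a convex subset of $\mathbb C$ containing $0$, for all $p\in[1,+\infty]$; (2) if $p,q\in[1,+\infty)$, then $\Lambda_q(\Omega)=\frac pq\Lambda_p(\Omega)$; (3) if $1\le p\le q\le+\infty$, then $\Lambda_q(\Omega)\subseteq\Lambda_p(\Omega)$ and hence $\mathcal E_q(\Omega)\subseteq\mathcal E_p(\Omega)$; in particular $\Lambda_\infty(\Omega)\subseteq\bigcap_{1\le p<\infty}\Lambda_p(\Omega)$ and $\mathcal E_\infty(\Omega)\subseteq\bigcap_{1\le p<\infty}\mathcal E_p(\Omega)$; (4) for $\lambda\in\mathbb C\setminus\{0\}$, $e^{\lambda z}\in H^\infty(\Omega)$ if and only if $\Omega\subseteq\{z\in\mathbb C:\operatorname{Re}(\lambda z)<M\}$ for some $M\in\mathbb R$; in particular, if $\lambda\in\Lambda_\infty(\Omega)$ then $t\lambda\in\Lambda_\infty(\Omega)$ for all $t\ge0$; (5) if $D$ is the Koenigs domain of another non-elliptic semigroup and $\Omega\subset D$, then $\Lambda_p(D)\subseteq\Lambda_p(\Omega)$ and $\mathcal E_p(D)\subseteq\mathcal E_p(\Omega)$ for all $p\in[1,+\infty]$.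
   Context: A semigroup in $\mathbb D$ is a family $(\varphi_t)_{t\ge0}$ of holomorphic self-maps of the unit disc with $\varphi_0=\mathrm{id}$, $\varphi_t\circ\varphi_s=\varphi_{t+s}$, continuous in $t$; non-elliptic if no $\varphi_t$, $t>0$, has an interior fixed point. Its Koenigs function is a univalent $h:\mathbb D\to\mathbb C$ with $h\circ\varphi_t=h+t$ and $\bigcup_{t\ge0}(h(\mathbb D)-t)$ equal to $\mathbb C$, a horizontal half-plane or a horizontal strip; its Koenigs domain is $\Omega=h(\mathbb D)$. For simply connected $G\subsetneq\mathbb C$ and $1\le p<\infty$, $H^p(G)$ is the space of holomorphic $f$ on $G$ such that $|f|^p$ has a harmonic majorant; $H^\infty(G)$ is the space of bounded holomorphic functions. For $p\in[1,\infty]$, $\Lambda_p(G)=\{\lambda\in\mathbb C:e^{\lambda z}\in H^p(G)\}$ and $\mathcal E_p(G)=\operatorname{span}\{e^{\lambda z}:\lambda\in\Lambda_p(G)\}$. *)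

theory Defs
  imports "HOL-Analysis.Analysis"
begin

abbreviation unit_disc :: "complex set" where "unit_disc \<equiv> ball 0 1"

definition semigroup_in_disc :: "(real \<Rightarrow> complex \<Rightarrow> complex) \<Rightarrow> bool" where
  "semigroup_in_disc \<phi> \<longleftrightarrow>
     (\<forall>t\<ge>0. \<phi> t holomorphic_on unit_disc \<and> \<phi> t ` unit_disc \<subseteq> unit_disc) \<and>
     (\<forall>z\<in>unit_disc. \<phi> 0 z = z) \<and>
     (\<forall>t\<ge>0. \<forall>s\<ge>0. \<forall>z\<in>unit_disc. \<phi> t (\<phi> s z) = \<phi> (t + s) z) \<and>
     (\<forall>z\<in>unit_disc. continuous_on {0..} (\<lambda>t. \<phi> t z))"

definition non_elliptic_semigroup :: "(real \<Rightarrow> complex \<Rightarrow> complex) \<Rightarrow> bool" where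
  "non_elliptic_semigroup \<phi> \<longleftrightarrow> semigroup_in_disc \<phi> \<and>
     (\<forall>t>0. \<forall>z\<in>unit_disc. \<phi> t z \<noteq> z)"

definition horizontal_half_plane :: "complex set \<Rightarrow> bool" where
  "horizontal_half_plane S \<longleftrightarrow> (\<exists>a::real. S = {z. Im z > a} \<or> S = {z. Im z < a})"

definition horizontal_strip :: "complex set \<Rightarrow> bool" where
  "horizontal_strip S \<longleftrightarrow> (\<exists>a b::real. a < b \<and> S = {z. a < Im z \<and> Im z < b})"

definition koenigs_function ::
  "(real \<Rightarrow> complex \<Rightarrow> complex) \<Rightarrow> (complex \<Rightarrow> complex) \<Rightarrow> bool" where
  "koenigs_function \<phi> h \<longleftrightarrow>
     h holomorphic_on unit_disc \<and> inj_on h unit_disc \<and>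
     (\<forall>t\<ge>0. \<forall>z\<in>unit_disc. h (\<phi> t z) = h z + of_real t) \<and>
     (let U = (\<Union>t\<in>{0::real..}. (\<lambda>w. w - of_real t) ` (h ` unit_disc)) in
        U = UNIV \<or> horizontal_half_plane U \<or> horizontal_strip U)"

definition koenigs_domain :: "complex set \<Rightarrow> bool" where
  "koenigs_domain \<Omega> \<longleftrightarrow>
     (\<exists>\<phi> h. non_elliptic_semigroup \<phi> \<and> koenigs_function \<phi> h \<and> \<Omega> = h ` unit_disc)"

text \<open>Here g z is the gradient of u at z (via the real inner product on complex),
  Dg z the derivative of the gradient; the Laplacian is
  u_xx + u_yy = Re (Dg z 1) + Im (Dg z i).\<close>
definition harmonic_on :: "(complex \<Rightarrow> real) \<Rightarrow> complex set \<Rightarrow> bool" where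
  "harmonic_on u G \<longleftrightarrow> open G \<and>
     (\<exists>g Dg. (\<forall>z\<in>G. (u has_derivative (\<lambda>w. g z \<bullet> w)) (at z)) \<and>
             (\<forall>z\<in>G. (g has_derivative Dg z) (at z)) \<and>
             continuous_on G (\<lambda>z. Dg z 1) \<and> continuous_on G (\<lambda>z. Dg z \<i>) \<and>
             (\<forall>z\<in>G. Re (Dg z 1) + Im (Dg z \<i>) = 0))"

definition hardy_fin :: "real \<Rightarrow> complex set \<Rightarrow> (complex \<Rightarrow> complex) \<Rightarrow> bool" where
  "hardy_fin p G f \<longleftrightarrow> f holomorphic_on G \<and>
     (\<exists>u. harmonic_on u G \<and> (\<forall>z\<in>G. norm (f z) powr p \<le> u z))"

definition hardy_inf :: "complex set \<Rightarrow> (complex \<Rightarrow> complex) \<Rightarrow> bool" where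
  "hardy_inf G f \<longleftrightarrow> f holomorphic_on G \<and> bounded (f ` G)"

definition hardy :: "ereal \<Rightarrow> complex set \<Rightarrow> (complex \<Rightarrow> complex) \<Rightarrow> bool" where
  "hardy p G f \<longleftrightarrow> (if p = \<infinity> then hardy_inf G f else hardy_fin (real_of_ereal p) G f)"

definition Lambda_set :: "ereal \<Rightarrow> complex set \<Rightarrow> complex set" where
  "Lambda_set p G = {l. hardy p G (\<lambda>z. exp (l * z))}"

definition E_span :: "ereal \<Rightarrow> complex set \<Rightarrow> (complex \<Rightarrow> complex) set" where
  "E_span p G = {f. \<exists>S c. finite S \<and> S \<subseteq> Lambda_set p G \<and>
                      f = (\<lambda>z. \<Sum>l\<in>S. c l * exp (l * z))}"

end

theory Submission
imports Defs "HOL-Complex_Analysis.Conformal_Mappings" begin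

lemma harmonic_affine:
  assumes "harmonic_on u G" "harmonic_on v G"
  shows "harmonic_on (\<lambda>z. c + a * u z + b * v z) G"
proof -
  from assms(1) obtain g1 Dg1 where h1: "open G" "\<forall>z\<in>G. (u has_derivative (\<lambda>w. g1 z \<bullet> w)) (at z)"
    "\<forall>z\<in>G. (g1 has_derivative Dg1 z) (at z)" "continuous_on G (\<lambda>z. Dg1 z 1)" "continuous_on G (\<lambda>z. Dg1 z \<i>)"
    "\<forall>z\<in>G. Re (Dg1 z 1) + Im (Dg1 z \<i>) = 0" unfolding harmonic_on_def by blast
  from assms(2) obtain g2 Dg2 where h2: "\<forall>z\<in>G. (v has_derivative (\<lambda>w. g2 z \<bullet> w)) (at z)"
    "\<forall>z\<in>G. (g2 has_derivative Dg2 z) (at z)" "continuous_on G (\<lambda>z. Dg2 z 1)" "continuous_on G (\<lambda>z. Dg2 z \<i>)"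
    "\<forall>z\<in>G. Re (Dg2 z 1) + Im (Dg2 z \<i>) = 0" unfolding harmonic_on_def by blast
  show ?thesis unfolding harmonic_on_def
  proof (intro conjI exI[of _ "\<lambda>z. a *\<^sub>R g1 z + b *\<^sub>R g2 z"] exI[of _ "\<lambda>z w. a *\<^sub>R Dg1 z w + b *\<^sub>R Dg2 z w"] ballI)
    show "open G" by fact
    fix z assume z: "z \<in> G"
    have "((\<lambda>z. c + a * u z + b * v z) has_derivative (\<lambda>w. 0 + a * (g1 z \<bullet> w) + b * (g2 z \<bullet> w))) (at z)"
      using h1(2) h2(1) z by (intro derivative_intros) auto
    then show "((\<lambda>z. c + a * u z + b * v z) has_derivative (\<lambda>w. (a *\<^sub>R g1 z + b *\<^sub>R g2 z) \<bullet> w)) (at z)"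
      by (simp add: inner_add_left)
    show "((\<lambda>z. a *\<^sub>R g1 z + b *\<^sub>R g2 z) has_derivative (\<lambda>w. a *\<^sub>R Dg1 z w + b *\<^sub>R Dg2 z w)) (at z)"
      using h1(3) h2(2) z by (intro derivative_intros) auto
    show "Re (a *\<^sub>R Dg1 z 1 + b *\<^sub>R Dg2 z 1) + Im (a *\<^sub>R Dg1 z \<i> + b *\<^sub>R Dg2 z \<i>) = 0"
    proof -
      have "Re (a *\<^sub>R Dg1 z 1 + b *\<^sub>R Dg2 z 1) + Im (a *\<^sub>R Dg1 z \<i> + b *\<^sub>R Dg2 z \<i>)
          = a * (Re (Dg1 z 1) + Im (Dg1 z \<i>)) + b * (Re (Dg2 z 1) + Im (Dg2 z \<i>))"
        by (simp add: algebra_simps)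
      then show ?thesis using h1(6) h2(5) z by simp
    qed
  next
    show "continuous_on G (\<lambda>z. a *\<^sub>R Dg1 z 1 + b *\<^sub>R Dg2 z 1)"
      using h1(4) h2(3) by (intro continuous_intros)
    show "continuous_on G (\<lambda>z. a *\<^sub>R Dg1 z \<i> + b *\<^sub>R Dg2 z \<i>)"
      using h1(5) h2(4) by (intro continuous_intros)
  qed
qed


lemma harmonic_const:
  assumes "open G" shows "harmonic_on (\<lambda>z. c) G"
proof -
  have e: "(\<lambda>w. (0::complex) \<bullet> w) = (\<lambda>w. 0)" by (rule ext) simp
  show ?thesis unfolding harmonic_on_def
    apply (rule conjI[OF assms], rule exI[of _ "\<lambda>z. 0"], rule exI[of _ "\<lambda>z w. 0"])
    by (simp add: continuous_on_const e)
qed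

lemma harmonic_subset:
  assumes "harmonic_on u G" "open H" "H \<subseteq> G" shows "harmonic_on u H"
proof -
  from assms(1) obtain g Dg where h: "\<forall>z\<in>G. (u has_derivative (\<lambda>w. g z \<bullet> w)) (at z)"
    "\<forall>z\<in>G. (g has_derivative Dg z) (at z)" "continuous_on G (\<lambda>z. Dg z 1)" "continuous_on G (\<lambda>z. Dg z \<i>)"
    "\<forall>z\<in>G. Re (Dg z 1) + Im (Dg z \<i>) = 0" unfolding harmonic_on_def by blast
  show ?thesis unfolding harmonic_on_def
    apply (rule conjI[OF assms(2)])
    apply (rule exI[of _ g], rule exI[of _ Dg])
    using h assms(3) continuous_on_subset[OF h(3) assms(3)] continuous_on_subset[OF h(4) assms(3)] by blast
qed

lemma norm_exp_powr: "norm (exp w) powr p = exp (p * Re w)"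
  by (simp add: powr_def norm_exp_eq_Re)

lemma hardy_fin_exp:
  "hardy_fin p G (\<lambda>z. exp (l*z)) \<longleftrightarrow> (\<exists>u. harmonic_on u G \<and> (\<forall>z\<in>G. exp (p * Re (l*z)) \<le> u z))"
  unfolding hardy_fin_def norm_exp_powr by (auto intro: holomorphic_intros)

lemma exp_conv: "0 \<le> t \<Longrightarrow> t \<le> 1 \<Longrightarrow> exp ((1-t)*x + t*y) \<le> (1-t) * exp x + t * exp (y::real)"
  using convex_onD[OF exp_convex, of t x y] by simp

lemma koenigs_open: "koenigs_domain \<Omega> \<Longrightarrow> open \<Omega>"
  unfolding koenigs_domain_def koenigs_function_def
  by (auto intro!: open_mapping_thm3)


lemma Lam_fin: "Lambda_set (ereal p) G = {l. \<exists>u. harmonic_on u G \<and> (\<forall>z\<in>G. exp (p * Re (l*z)) \<le> u z)}"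
  unfolding Lambda_set_def hardy_def hardy_fin_exp by simp

lemma Lam_inf: "Lambda_set \<infinity> G = {l. \<exists>B. \<forall>z\<in>G. exp (Re (l*z)) \<le> B}"
  unfolding Lambda_set_def hardy_def hardy_inf_def bounded_iff
  by (auto intro: holomorphic_intros simp: norm_exp_eq_Re)

lemma Re_comb: "Re ((u *\<^sub>R l1 + v *\<^sub>R l2) * z) = u * Re (l1 * z) + v * Re (l2 * z)"
  by (simp add: scaleR_conv_of_real algebra_simps)

lemma Re_ofr: "Re (complex_of_real c * w) = c * Re w" by simp

lemma E_mono: "Lambda_set q G \<subseteq> Lambda_set p G' \<Longrightarrow> E_span q G \<subseteq> E_span p G'"
  unfolding E_span_def by blast

lemma ereal_ge1: "1 \<le> (p::ereal) \<Longrightarrow> p = \<infinity> \<or> (\<exists>r. 1 \<le> r \<and> p = ereal r)"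
  by (cases p) auto

lemma fin_convex: "convex (Lambda_set (ereal p) G)"
  unfolding convex_def
proof (intro ballI allI impI)
  fix x y and u v :: real
  assume x: "x \<in> Lambda_set (ereal p) G" and y: "y \<in> Lambda_set (ereal p) G"
    and uv: "0 \<le> u" "0 \<le> v" "u + v = 1"
  have uu: "u = 1 - v" using uv by simp
  from x obtain u1 where u1: "harmonic_on u1 G" "\<forall>z\<in>G. exp (p * Re (x*z)) \<le> u1 z"
    unfolding Lam_fin by blast
  from y obtain u2 where u2: "harmonic_on u2 G" "\<forall>z\<in>G. exp (p * Re (y*z)) \<le> u2 z"
    unfolding Lam_fin by blast
  have "harmonic_on (\<lambda>z. 0 + u * u1 z + v * u2 z) G" by (rule harmonic_affine[OF u1(1) u2(1)])
  moreover have "\<forall>z\<in>G. exp (p * Re ((u *\<^sub>R x + v *\<^sub>R y) * z)) \<le> 0 + u * u1 z + v * u2 z"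
  proof
    fix z assume z: "z \<in> G"
    have "exp (p * Re ((u *\<^sub>R x + v *\<^sub>R y) * z)) = exp ((1 - v) * (p * Re (x*z)) + v * (p * Re (y*z)))"
      unfolding Re_comb uu by (simp add: algebra_simps)
    also have "\<dots> \<le> (1 - v) * exp (p * Re (x*z)) + v * exp (p * Re (y*z))"
      using uv by (intro exp_conv) auto
    also have "\<dots> = u * exp (p * Re (x*z)) + v * exp (p * Re (y*z))" using uu by simp
    also have "\<dots> \<le> u * u1 z + v * u2 z"
      using uv u1(2) u2(2) z by (intro add_mono mult_left_mono) auto
    finally show "exp (p * Re ((u *\<^sub>R x + v *\<^sub>R y) * z)) \<le> 0 + u * u1 z + v * u2 z" by simp
  qed
  ultimately show "u *\<^sub>R x + v *\<^sub>R y \<in> Lambda_set (ereal p) G" unfolding Lam_fin by blast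
qed

lemma inf_convex: "convex (Lambda_set \<infinity> G)"
  unfolding convex_def
proof (intro ballI allI impI)
  fix x y and u v :: real
  assume x: "x \<in> Lambda_set \<infinity> G" and y: "y \<in> Lambda_set \<infinity> G"
    and uv: "0 \<le> u" "0 \<le> v" "u + v = 1"
  have uu: "u = 1 - v" using uv by simp
  from x obtain B1 where u1: "\<forall>z\<in>G. exp (Re (x*z)) \<le> B1" unfolding Lam_inf by blast
  from y obtain B2 where u2: "\<forall>z\<in>G. exp (Re (y*z)) \<le> B2" unfolding Lam_inf by blast
  have "\<forall>z\<in>G. exp (Re ((u *\<^sub>R x + v *\<^sub>R y) * z)) \<le> u * B1 + v * B2"
  proof
    fix z assume z: "z \<in> G"
    have "exp (Re ((u *\<^sub>R x + v *\<^sub>R y) * z)) = exp ((1 - v) * (Re (x*z)) + v * (Re (y*z)))"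
      unfolding Re_comb uu by (simp add: algebra_simps)
    also have "\<dots> \<le> (1 - v) * exp (Re (x*z)) + v * exp (Re (y*z))"
      using uv by (intro exp_conv) auto
    also have "\<dots> = u * exp (Re (x*z)) + v * exp (Re (y*z))" using uu by simp
    also have "\<dots> \<le> u * B1 + v * B2"
      using uv u1 u2 z by (intro add_mono mult_left_mono) auto
    finally show "exp (Re ((u *\<^sub>R x + v *\<^sub>R y) * z)) \<le> u * B1 + v * B2" .
  qed
  then show "u *\<^sub>R x + v *\<^sub>R y \<in> Lambda_set \<infinity> G" unfolding Lam_inf by blast
qed

lemma zero_in: "open G \<Longrightarrow> 1 \<le> p \<Longrightarrow> 0 \<in> Lambda_set p G"
proof (drule_tac ereal_ge1, elim disjE exE conjE)
  assume "open G" "p = \<infinity>" then show ?thesis by (auto simp: Lam_inf)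
next
  fix r assume "open G" "p = ereal r"
  then show ?thesis using harmonic_const[of G 1] by (auto simp: Lam_fin)
qed

lemma scale_fin: "0 < p \<Longrightarrow> 0 < q \<Longrightarrow>
   Lambda_set (ereal q) G = (\<lambda>l. complex_of_real (p / q) * l) ` Lambda_set (ereal p) G"
proof
  assume pq: "0 < p" "0 < q"
  show "Lambda_set (ereal q) G \<subseteq> (\<lambda>l. complex_of_real (p / q) * l) ` Lambda_set (ereal p) G"
  proof
    fix l assume l: "l \<in> Lambda_set (ereal q) G"
    have e: "l = complex_of_real (p / q) * (complex_of_real (q / p) * l)" using pq by simp
    have eq: "\<And>z. p * Re (complex_of_real (q / p) * l * z) = q * Re (l * z)"
      using pq by (simp only: mult.assoc Re_ofr) simp
    have "complex_of_real (q / p) * l \<in> Lambda_set (ereal p) G"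
      using l unfolding Lam_fin mem_Collect_eq eq .
    then show "l \<in> (\<lambda>l. complex_of_real (p / q) * l) ` Lambda_set (ereal p) G"
      using e by blast
  qed
  show "(\<lambda>l. complex_of_real (p / q) * l) ` Lambda_set (ereal p) G \<subseteq> Lambda_set (ereal q) G"
  proof
    fix m assume "m \<in> (\<lambda>l. complex_of_real (p / q) * l) ` Lambda_set (ereal p) G"
    then obtain l where l: "l \<in> Lambda_set (ereal p) G" and m: "m = complex_of_real (p / q) * l" by blast
    have eq: "\<And>z. q * Re (complex_of_real (p / q) * l * z) = p * Re (l * z)"
      using pq by (simp only: mult.assoc Re_ofr) simp
    show "m \<in> Lambda_set (ereal q) G"
      using l unfolding m Lam_fin mem_Collect_eq eq .
  qed
qed

lemma mono_fin: "0 < p \<Longrightarrow> p \<le> q \<Longrightarrow> Lambda_set (ereal q) G \<subseteq> Lambda_set (ereal p) G"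
proof
  fix l assume pq: "0 < p" "p \<le> q" and l: "l \<in> Lambda_set (ereal q) G"
  from l obtain u where u: "harmonic_on u G" "\<forall>z\<in>G. exp (q * Re (l*z)) \<le> u z"
    unfolding Lam_fin by blast
  define r where "r = p / q"
  have r: "0 \<le> r" "r \<le> 1" "p = r * q" using pq by (auto simp: r_def)
  have "harmonic_on (\<lambda>z. (1 - r) + r * u z + 0 * u z) G" by (rule harmonic_affine[OF u(1) u(1)])
  moreover have "\<forall>z\<in>G. exp (p * Re (l*z)) \<le> (1 - r) + r * u z + 0 * u z"
  proof
    fix z assume z: "z \<in> G"
    have "exp (p * Re (l*z)) = exp ((1 - r) * 0 + r * (q * Re (l*z)))" using r by simp
    also have "\<dots> \<le> (1 - r) * exp 0 + r * exp (q * Re (l*z))" using r by (intro exp_conv) auto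
    also have "\<dots> \<le> (1 - r) + r * u z" using r u(2) z by (simp add: mult_left_mono)
    finally show "exp (p * Re (l*z)) \<le> (1 - r) + r * u z + 0 * u z" by simp
  qed
  ultimately show "l \<in> Lambda_set (ereal p) G" unfolding Lam_fin by blast
qed

lemma mono_inf: "open G \<Longrightarrow> 0 \<le> p \<Longrightarrow> Lambda_set \<infinity> G \<subseteq> Lambda_set (ereal p) G"
proof
  fix l assume G: "open G" and p: "0 \<le> p" and l: "l \<in> Lambda_set \<infinity> G"
  from l obtain B where B: "\<forall>z\<in>G. exp (Re (l*z)) \<le> B" unfolding Lam_inf by blast
  have "\<forall>z\<in>G. exp (p * Re (l*z)) \<le> B powr p"
  proof
    fix z assume z: "z \<in> G"
    have "exp (p * Re (l*z)) = exp (Re (l*z)) powr p" by (simp add: powr_def)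
    also have "\<dots> \<le> B powr p" using B z p by (intro powr_mono2) auto
    finally show "exp (p * Re (l*z)) \<le> B powr p" .
  qed
  then show "l \<in> Lambda_set (ereal p) G" unfolding Lam_fin using harmonic_const[OF G, of "B powr p"] by blast
qed

lemma mono_ereal: "open G \<Longrightarrow> 1 \<le> p \<Longrightarrow> p \<le> q \<Longrightarrow> Lambda_set q G \<subseteq> Lambda_set p G"
proof -
  assume G: "open G" and p: "1 \<le> p" and pq: "p \<le> q"
  have q: "1 \<le> q" using p pq by simp
  show ?thesis
  using ereal_ge1[OF p] ereal_ge1[OF q]
  proof (elim disjE exE conjE)
    fix a b assume "1 \<le> a" "p = ereal a" "1 \<le> b" "q = ereal b"
    then show ?thesis using pq mono_fin[of a b G] by simp
  next
    fix a assume "1 \<le> a" "p = ereal a" "q = \<infinity>"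
    then show ?thesis using mono_inf[OF G, of a] by simp
  next
    fix b assume "p = \<infinity>" "1 \<le> b" "q = ereal b" then show ?thesis using pq by simp
  qed simp
qed

lemma subdom: "open \<Omega> \<Longrightarrow> \<Omega> \<subseteq> D \<Longrightarrow> 1 \<le> p \<Longrightarrow> Lambda_set p D \<subseteq> Lambda_set p \<Omega>"
proof (drule_tac ereal_ge1[of p], elim disjE exE conjE)
  assume "\<Omega> \<subseteq> D" "p = \<infinity>" then show ?thesis by (auto simp: Lam_inf)
next
  fix r assume O: "open \<Omega>" "\<Omega> \<subseteq> D" "p = ereal r"
  show ?thesis unfolding O(3) Lam_fin using harmonic_subset[OF _ O(1,2)] O(2) by blast
qed

lemma part4: "hardy_inf \<Omega> (\<lambda>z. exp (l * z)) \<longleftrightarrow> (\<exists>M::real. \<Omega> \<subseteq> {z. Re (l * z) < M})"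
proof
  assume "hardy_inf \<Omega> (\<lambda>z. exp (l * z))"
  then have "l \<in> Lambda_set \<infinity> \<Omega>" unfolding Lambda_set_def hardy_def by simp
  then obtain B where B: "\<forall>z\<in>\<Omega>. exp (Re (l*z)) \<le> B" unfolding Lam_inf by blast
  have "\<Omega> \<subseteq> {z. Re (l * z) < ln B + 1}"
  proof
    fix z assume z: "z \<in> \<Omega>"
    have "0 < B" using B z by (meson exp_gt_zero less_le_trans)
    then have "Re (l*z) \<le> ln B" using B z by (metis ln_exp ln_le_cancel_iff exp_gt_zero)
    then show "z \<in> {z. Re (l * z) < ln B + 1}" by simp
  qed
  then show "\<exists>M::real. \<Omega> \<subseteq> {z. Re (l * z) < M}" by blast
next
  assume "\<exists>M::real. \<Omega> \<subseteq> {z. Re (l * z) < M}"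
  then obtain M where "\<Omega> \<subseteq> {z. Re (l * z) < M}" by blast
  then have "\<forall>z\<in>\<Omega>. exp (Re (l*z)) \<le> exp M" by auto
  then have "l \<in> Lambda_set \<infinity> \<Omega>" unfolding Lam_inf by blast
  then show "hardy_inf \<Omega> (\<lambda>z. exp (l * z))" unfolding Lambda_set_def hardy_def by simp
qed

lemma scale_inf: "l \<in> Lambda_set \<infinity> G \<Longrightarrow> 0 \<le> t \<Longrightarrow> complex_of_real t * l \<in> Lambda_set \<infinity> G"
proof -
  assume l: "l \<in> Lambda_set \<infinity> G" and t: "0 \<le> t"
  from l obtain B where B: "\<forall>z\<in>G. exp (Re (l*z)) \<le> B" unfolding Lam_inf by blast
  have "\<forall>z\<in>G. exp (Re (complex_of_real t * l * z)) \<le> B powr t"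
  proof
    fix z assume z: "z \<in> G"
    have "exp (Re (complex_of_real t * l * z)) = exp (Re (l*z)) powr t" by (simp add: powr_def mult.assoc)
    also have "\<dots> \<le> B powr t" using B z t by (intro powr_mono2) auto
    finally show "exp (Re (complex_of_real t * l * z)) \<le> B powr t" .
  qed
  then show ?thesis unfolding Lam_inf by blast
qed

theorem proposition3p3:
  fixes \<Omega> :: "complex set"
  assumes "koenigs_domain \<Omega>"
  shows
    "(\<forall>p::ereal. 1 \<le> p \<longrightarrow> convex (Lambda_set p \<Omega>) \<and> 0 \<in> Lambda_set p \<Omega>)
     \<and> (\<forall>p q :: real. 1 \<le> p \<longrightarrow> 1 \<le> q \<longrightarrow>
          Lambda_set (ereal q) \<Omega> = (\<lambda>l. complex_of_real (p / q) * l) ` Lambda_set (ereal p) \<Omega>)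
     \<and> (\<forall>p q :: ereal. 1 \<le> p \<longrightarrow> p \<le> q \<longrightarrow>
          Lambda_set q \<Omega> \<subseteq> Lambda_set p \<Omega> \<and> E_span q \<Omega> \<subseteq> E_span p \<Omega>)
     \<and> Lambda_set \<infinity> \<Omega> \<subseteq> (\<Inter>p\<in>{p::real. 1 \<le> p}. Lambda_set (ereal p) \<Omega>)
     \<and> E_span \<infinity> \<Omega> \<subseteq> (\<Inter>p\<in>{p::real. 1 \<le> p}. E_span (ereal p) \<Omega>)
     \<and> (\<forall>l::complex. l \<noteq> 0 \<longrightarrow>
          (hardy_inf \<Omega> (\<lambda>z. exp (l * z)) \<longleftrightarrow> (\<exists>M::real. \<Omega> \<subseteq> {z. Re (l * z) < M})))
     \<and> (\<forall>l \<in> Lambda_set \<infinity> \<Omega>. \<forall>t::real. t \<ge> 0 \<longrightarrow> complex_of_real t * l \<in> Lambda_set \<infinity> \<Omega>)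
     \<and> (\<forall>D::complex set. koenigs_domain D \<longrightarrow> \<Omega> \<subseteq> D \<longrightarrow>
          (\<forall>p::ereal. 1 \<le> p \<longrightarrow>
             Lambda_set p D \<subseteq> Lambda_set p \<Omega> \<and> E_span p D \<subseteq> E_span p \<Omega>))"
proof -
  have O: "open \<Omega>" using koenigs_open[OF assms] .
  have c: "convex (Lambda_set p \<Omega>)" if "1 \<le> p" for p
    using ereal_ge1[OF that] fin_convex inf_convex by auto
  have m: "Lambda_set q \<Omega> \<subseteq> Lambda_set p \<Omega> \<and> E_span q \<Omega> \<subseteq> E_span p \<Omega>" if "1 \<le> p" "p \<le> q" for p q
    using mono_ereal[OF O that] E_mono by blast
  have i: "Lambda_set \<infinity> \<Omega> \<subseteq> Lambda_set (ereal p) \<Omega>" if "1 \<le> p" for p :: real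
    using m[of "ereal p" \<infinity>] that by simp
  have ie: "E_span \<infinity> \<Omega> \<subseteq> E_span (ereal p) \<Omega>" if "1 \<le> p" for p :: real
    using m[of "ereal p" \<infinity>] that by simp
  have s: "Lambda_set (ereal q) \<Omega> = (\<lambda>l. complex_of_real (p / q) * l) ` Lambda_set (ereal p) \<Omega>"
    if "1 \<le> p" "1 \<le> q" for p q :: real
    using scale_fin[of p q \<Omega>] that by simp
  have d: "Lambda_set p D \<subseteq> Lambda_set p \<Omega> \<and> E_span p D \<subseteq> E_span p \<Omega>"
    if "\<Omega> \<subseteq> D" "1 \<le> p" for D p
    using subdom[OF O that] E_mono by blast
  have P1: "\<forall>p::ereal. 1 \<le> p \<longrightarrow> convex (Lambda_set p \<Omega>) \<and> 0 \<in> Lambda_set p \<Omega>"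
    using c zero_in[OF O] by blast
  have P2: "\<forall>p q :: real. 1 \<le> p \<longrightarrow> 1 \<le> q \<longrightarrow>
          Lambda_set (ereal q) \<Omega> = (\<lambda>l. complex_of_real (p / q) * l) ` Lambda_set (ereal p) \<Omega>"
    by (intro allI impI, rule s)
  have P3: "\<forall>p q :: ereal. 1 \<le> p \<longrightarrow> p \<le> q \<longrightarrow>
          Lambda_set q \<Omega> \<subseteq> Lambda_set p \<Omega> \<and> E_span q \<Omega> \<subseteq> E_span p \<Omega>"
    by (intro allI impI, rule m)
  have P4: "Lambda_set \<infinity> \<Omega> \<subseteq> (\<Inter>p\<in>{p::real. 1 \<le> p}. Lambda_set (ereal p) \<Omega>)"
    using i by blast
  have P5: "E_span \<infinity> \<Omega> \<subseteq> (\<Inter>p\<in>{p::real. 1 \<le> p}. E_span (ereal p) \<Omega>)"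
    using ie by blast
  have P6: "\<forall>l::complex. l \<noteq> 0 \<longrightarrow>
          (hardy_inf \<Omega> (\<lambda>z. exp (l * z)) \<longleftrightarrow> (\<exists>M::real. \<Omega> \<subseteq> {z. Re (l * z) < M}))"
    by (intro allI impI, rule part4)
  have P7: "\<forall>l \<in> Lambda_set \<infinity> \<Omega>. \<forall>t::real. t \<ge> 0 \<longrightarrow> complex_of_real t * l \<in> Lambda_set \<infinity> \<Omega>"
    by (intro allI impI ballI, rule scale_inf)
  have P8: "\<forall>D::complex set. koenigs_domain D \<longrightarrow> \<Omega> \<subseteq> D \<longrightarrow>
          (\<forall>p::ereal. 1 \<le> p \<longrightarrow>
             Lambda_set p D \<subseteq> Lambda_set p \<Omega> \<and> E_span p D \<subseteq> E_span p \<Omega>)"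
    by (intro allI impI, rule d)
  show ?thesis by (intro conjI P1 P2 P3 P4 P5 P6 P7 P8)
qed

end
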